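(* Let $S$ be a finite non-empty set and $\Sigma\subseteq\mathbb{R}_+\times S$ locally finite, and let $(X_n,\eta_n)$ be a time-homogeneous irreducible Markov chain on $\Sigma$ such that every line $\Lambda_k=\{x:(x,k)\in\Sigma\}$ is unbounded. Suppose that for some $p>2$ there is $C_p<\infty$ with $\mathbb{E}_{x,i}[|X_{n+1}-X_n|^p]\le C_p$ for all $(x,i)\in\Sigma$, and assume conditions (Q$_G$) and (D$_G$). Let $(a_i)_{i\in S}$ with $a_i\ge0$ for all $i$ be a solution of $d_i+\sum_{j\in S}(a_j-a_i)q_{ij}=0$ for all $i\in S$. Let $\widetilde X_n:=X_n+a_{\eta_n}$ and define $\widetilde\mu_i(y)=\mathbb{E}[\widetilde X_{n+1}-\widetilde X_n\mid\widetilde X_n=y,\eta_n=i]$, $\widetilde\sigma_i^2(y)=\mathbb{E}[(\widetilde X_{n+1}-\widetilde X_n)^2\mid\widetilde X_n=y,\eta_n=i]$. Either (i) set $\delta_4=0$; or (ii) suppose in addition that (Q$_G^+$) and (D$_G^+$) hold and set $\delta_4=\delta_2\wedge\delta_3\in(0,1)$. For $i\in S$ define \[c_i:=e_i+\sum_{j\in S}a_j\gamma_{ij},\qquad s_i^2:=t_i^2+2\sum_{j\in S}a_jd_{ij}+\sum_{j\in S}(a_j^2-a_i^2)q_{ij}.\] Then, as $x\to\infty$, $\widetilde\mu_i(x)=\frac{c_i}x+o(x^{-1-\delta_4})$ and $\widetilde\sigma_i^2(x)=s_i^2+o(x^{-\delta_4})$.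
   Context: Locally finite means $\Sigma\cap([0,r]\times S)$ is finite for every $r\ge0$. Write $\mathbb{E}_{x,i}[\cdot]=\mathbb{E}[\cdot\mid X_n=x,\eta_n=i]$, $q_{ij}(x)=\Pr[\eta_{n+1}=j\mid X_n=x,\eta_n=i]$, $\mu_i(x)=\mathbb{E}_{x,i}[X_{n+1}-X_n]$, $\sigma_i^2(x)=\mathbb{E}_{x,i}[(X_{n+1}-X_n)^2]$, $\mu_{ij}(x)=\mathbb{E}_{x,i}[(X_{n+1}-X_n)\mathbf 1\{\eta_{n+1}=j\}]$. (Q$_G$): there are $\gamma_{ij}\in\mathbb{R}$ with $q_{ij}(x)=q_{ij}+\gamma_{ij}/x+o(x^{-1})$ as $x\to\infty$, where $(q_{ij})$ is an irreducible stochastic matrix with stationary distribution $\pi$. (D$_G$): there are $d_i,e_i,d_{ij}\in\mathbb{R}$ and $t_i^2\ge0$ with at least one $t_i^2\ne0$, such that as $x\to\infty$: $\mu_i(x)=d_i+e_i/x+o(x^{-1})$, $\sigma_i^2(x)=t_i^2+o(1)$, $\mu_{ij}(x)=d_{ij}+o(1)$ for all $i,j$, and $\sum_i\pi_id_i=0$. (Q$_G^+$): there is $\delta_3\in(0,1)$ with $q_{ij}(x)=q_{ij}+\gamma_{ij}/x+o(x^{-1-\delta_3})$. (D$_G^+$): there is $\delta_2\in(0,1)$ with $\mu_i(x)=d_i+e_i/x+o(x^{-1-\delta_2})$, $\sigma_i^2(x)=t_i^2+o(x^{-\delta_2})$, $\mu_{ij}(x)=d_{ij}+o(x^{-\delta_2})$.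 *)

theory Defs
  imports "HOL-Probability.Probability" "HOL-Library.Landau_Symbols"
begin

text \<open>A time-homogeneous Markov chain on a countable state space is represented by its
transition kernel K: state (x,i) goes to a random state distributed as K (x,i).
All conditional quantities E_{x,i}[...] are expectations w.r.t. K (x,i).\<close>

definition locally_finite :: "(real \<times> 's) set \<Rightarrow> bool" where
  "locally_finite \<Sigma> \<longleftrightarrow> (\<forall>r\<ge>0. finite (\<Sigma> \<inter> ({0..r} \<times> UNIV)))"

definition line :: "(real \<times> 's) set \<Rightarrow> 's \<Rightarrow> real set" where
  "line \<Sigma> k = {x. (x, k) \<in> \<Sigma>}"

definition chain_irreducible :: "(real \<times> 's) set \<Rightarrow> (real \<times> 's \<Rightarrow> (real \<times> 's) pmf) \<Rightarrow> bool" where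
  "chain_irreducible \<Sigma> K \<longleftrightarrow>
     (\<forall>z\<in>\<Sigma>. \<forall>w\<in>\<Sigma>. (z, w) \<in> {(u, v). u \<in> \<Sigma> \<and> pmf (K u) v > 0}\<^sup>*)"

definition along :: "real set \<Rightarrow> real filter" where
  "along A = inf at_top (principal A)"

definition qx :: "(real \<times> 's \<Rightarrow> (real \<times> 's) pmf) \<Rightarrow> 's \<Rightarrow> 's \<Rightarrow> real \<Rightarrow> real" where
  "qx K i j x = measure_pmf.prob (K (x, i)) {w. snd w = j}"

definition mux :: "(real \<times> 's \<Rightarrow> (real \<times> 's) pmf) \<Rightarrow> 's \<Rightarrow> real \<Rightarrow> real" where
  "mux K i x = measure_pmf.expectation (K (x, i)) (\<lambda>w. fst w - x)"

definition sigma2x :: "(real \<times> 's \<Rightarrow> (real \<times> 's) pmf) \<Rightarrow> 's \<Rightarrow> real \<Rightarrow> real" where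
  "sigma2x K i x = measure_pmf.expectation (K (x, i)) (\<lambda>w. (fst w - x)\<^sup>2)"

definition muijx :: "(real \<times> 's \<Rightarrow> (real \<times> 's) pmf) \<Rightarrow> 's \<Rightarrow> 's \<Rightarrow> real \<Rightarrow> real" where
  "muijx K i j x = measure_pmf.expectation (K (x, i))
      (\<lambda>w. (fst w - x) * (if snd w = j then 1 else 0))"

text \<open>Tilde quantities: given \<tilde>X_n = y and \<eta>_n = i we have X_n = y - a_i.\<close>
definition mut :: "(real \<times> 's \<Rightarrow> (real \<times> 's) pmf) \<Rightarrow> ('s \<Rightarrow> real) \<Rightarrow> 's \<Rightarrow> real \<Rightarrow> real" where
  "mut K a i y = measure_pmf.expectation (K (y - a i, i)) (\<lambda>w. (fst w + a (snd w)) - y)"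

definition sigma2t :: "(real \<times> 's \<Rightarrow> (real \<times> 's) pmf) \<Rightarrow> ('s \<Rightarrow> real) \<Rightarrow> 's \<Rightarrow> real \<Rightarrow> real" where
  "sigma2t K a i y = measure_pmf.expectation (K (y - a i, i)) (\<lambda>w. ((fst w + a (snd w)) - y)\<^sup>2)"

end

theory Submission
  imports Defs "HOL-Real_Asymp.Real_Asymp"
begin

lemma pow_bound:
  fixes z p :: real assumes "p > 2"
  shows "\<bar>z\<bar> \<le> 1 + \<bar>z\<bar> powr p" "z\<^sup>2 \<le> 1 + \<bar>z\<bar> powr p"
proof -
  have "z\<^sup>2 \<le> 1 + \<bar>z\<bar> powr p \<and> \<bar>z\<bar> \<le> 1 + \<bar>z\<bar> powr p"
  proof (cases "\<bar>z\<bar> \<le> 1")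
    case True
    then have "z\<^sup>2 \<le> 1" by (metis abs_ge_zero abs_square_le_1)
    then show ?thesis using True by (simp add: add_increasing2)
  next
    case False
    then have "\<bar>z\<bar> powr 2 \<le> \<bar>z\<bar> powr p" using assms by (intro powr_mono) auto
    moreover have "\<bar>z\<bar> powr 2 = z\<^sup>2" using False by (simp add: powr_numeral)
    moreover have "\<bar>z\<bar> \<le> z\<^sup>2"
    proof -
      have "\<bar>z\<bar> * 1 \<le> \<bar>z\<bar> * \<bar>z\<bar>" using False by (intro mult_left_mono) auto
      then show ?thesis by (simp add: power2_eq_square abs_mult_self_eq)
    qed
    ultimately show ?thesis by linarith
  qed
  then show "\<bar>z\<bar> \<le> 1 + \<bar>z\<bar> powr p" "z\<^sup>2 \<le> 1 + \<bar>z\<bar> powr p" by auto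
qed

lemma integrable_moment:
  fixes N :: "'a pmf" and f :: "'a \<Rightarrow> real"
  assumes "(\<integral>\<^sup>+ w. ennreal (\<bar>f w\<bar> powr p) \<partial>N) \<le> ennreal C" "p > 2"
  shows "integrable N f" "integrable N (\<lambda>w. (f w)\<^sup>2)"
proof -
  have "integrable N (\<lambda>w. \<bar>f w\<bar> powr p)"
    using assms(1) by (intro integrableI_nonneg) (auto simp: le_less_trans)
  then have I: "integrable N (\<lambda>w. 1 + \<bar>f w\<bar> powr p)" by simp
  show "integrable N f"
    by (rule Bochner_Integration.integrable_bound[OF I]) (auto intro!: pow_bound[OF assms(2)] simp: order_trans[OF _ abs_ge_self])
  show "integrable N (\<lambda>w. (f w)\<^sup>2)"
    by (rule Bochner_Integration.integrable_bound[OF I]) (auto intro!: pow_bound[OF assms(2)] simp: order_trans[OF _ abs_ge_self])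
qed


lemma ind_sum:
  fixes a :: "'s::finite \<Rightarrow> real"
  shows "(\<Sum>j\<in>UNIV. a j * (if s = j then 1 else 0)) = a s"
  by (simp add: if_distrib cong: if_cong)

lemma integrable_ind:
  fixes N :: "(real \<times> 's) pmf"
  shows "integrable N (\<lambda>w. if snd w = j then 1 else (0::real))"
  by (rule measure_pmf.integrable_const_bound[where B=1]) auto

lemma prob_ind:
  fixes N :: "(real \<times> 's) pmf"
  shows "measure_pmf.prob N {w. snd w = j} = measure_pmf.expectation N (\<lambda>w. if snd w = j then 1 else (0::real))"
proof -
  have "measure_pmf.expectation N (\<lambda>w. if snd w = j then 1 else (0::real))
      = measure_pmf.expectation N (indicator {w. snd w = j})"
    by (rule Bochner_Integration.integral_cong) (auto simp: indicator_def)
  then show ?thesis by simp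
qed

lemma integrable_zind:
  fixes N :: "(real \<times> 's) pmf"
  assumes "integrable N (\<lambda>w. fst w - x)"
  shows "integrable N (\<lambda>w. (fst w - x) * (if snd w = j then 1 else (0::real)))"
  by (rule Bochner_Integration.integrable_bound[OF assms]) auto

lemma exp_sum_c:
  fixes N :: "'a pmf" and c :: "'s::finite \<Rightarrow> real"
  assumes "\<And>j. integrable N (g j)"
  shows "measure_pmf.expectation N (\<lambda>w. \<Sum>j\<in>UNIV. c j * g j w) = (\<Sum>j\<in>UNIV. c j * measure_pmf.expectation N (g j))"
  by (subst Bochner_Integration.integral_sum) (auto simp: assms)

lemma mut_eq:
  fixes N :: "(real \<times> 's::finite) pmf" and a :: "'s \<Rightarrow> real"
  assumes int: "integrable N (\<lambda>w. fst w - x)"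
  shows "measure_pmf.expectation N (\<lambda>w. fst w + a (snd w) - y)
      = measure_pmf.expectation N (\<lambda>w. fst w - x)
        + (\<Sum>j\<in>UNIV. a j * measure_pmf.prob N {w. snd w = j}) - (y - x)"
proof -
  have eq: "(\<lambda>w. fst w + a (snd w) - y) = (\<lambda>w. (fst w - x)
        + (\<Sum>j\<in>UNIV. a j * (if snd w = j then 1 else 0)) - (y - x))"
    by (auto simp: ind_sum algebra_simps)
  have iS: "integrable N (\<lambda>w. \<Sum>j\<in>UNIV. a j * (if snd w = j then 1 else (0::real)))"
    by (intro Bochner_Integration.integrable_sum integrable_mult_right integrable_ind)
  have "measure_pmf.expectation N (\<lambda>w. (fst w - x)
        + (\<Sum>j\<in>UNIV. a j * (if snd w = j then 1 else 0)) - (y - x))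
     = measure_pmf.expectation N (\<lambda>w. fst w - x)
        + (\<Sum>j\<in>UNIV. a j * measure_pmf.expectation N (\<lambda>w. if snd w = j then 1 else (0::real))) - (y - x)"
    using int integrable_ind
    apply (subst Bochner_Integration.integral_diff)
      apply (rule Bochner_Integration.integrable_add[OF int iS])
     apply simp
    apply (subst Bochner_Integration.integral_add[OF int iS])
    apply (subst exp_sum_c[of N "\<lambda>j w. if snd w = j then 1 else (0::real)"])
     apply (rule integrable_ind)
    by simp
  then show ?thesis unfolding eq by (simp add: prob_ind)
qed

lemma sig_eq:
  fixes N :: "(real \<times> 's::finite) pmf" and a :: "'s \<Rightarrow> real"
  assumes int: "integrable N (\<lambda>w. fst w - x)" and int2: "integrable N (\<lambda>w. (fst w - x)\<^sup>2)"
    and y: "y = x + a i"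
  shows "measure_pmf.expectation N (\<lambda>w. (fst w + a (snd w) - y)\<^sup>2)
      = measure_pmf.expectation N (\<lambda>w. (fst w - x)\<^sup>2)
        + 2 * (\<Sum>j\<in>UNIV. a j * measure_pmf.expectation N (\<lambda>w. (fst w - x) * (if snd w = j then 1 else 0)))
        - 2 * a i * measure_pmf.expectation N (\<lambda>w. fst w - x)
        + (\<Sum>j\<in>UNIV. (a j - a i)\<^sup>2 * measure_pmf.prob N {w. snd w = j})"
proof -
  have s1: "(\<Sum>j\<in>UNIV. a j * ((fst w - x) * (if snd w = j then 1 else 0))) = a (snd w) * (fst w - x)" for w
    by (simp add: if_distrib cong: if_cong)
  have s2: "(\<Sum>j\<in>UNIV. (a j - a i)\<^sup>2 * (if snd w = j then 1 else 0)) = (a (snd w) - a i)\<^sup>2" for w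
    by (simp add: if_distrib cong: if_cong)
  have eq: "(\<lambda>w. (fst w + a (snd w) - y)\<^sup>2) = (\<lambda>w. (fst w - x)\<^sup>2
        + 2 * (\<Sum>j\<in>UNIV. a j * ((fst w - x) * (if snd w = j then 1 else 0)))
        - 2 * a i * (fst w - x)
        + (\<Sum>j\<in>UNIV. (a j - a i)\<^sup>2 * (if snd w = j then 1 else 0)))"
    unfolding s1 s2 y by (auto simp: power2_eq_square algebra_simps)
  have iA: "integrable N (\<lambda>w. 2 * (\<Sum>j\<in>UNIV. a j * ((fst w - x) * (if snd w = j then 1 else 0))))"
    by (intro integrable_mult_right Bochner_Integration.integrable_sum integrable_zind[OF int])
  have iB: "integrable N (\<lambda>w. (\<Sum>j\<in>UNIV. (a j - a i)\<^sup>2 * (if snd w = j then 1 else (0::real))))"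
    by (intro integrable_mult_right Bochner_Integration.integrable_sum integrable_ind)
  have iC: "integrable N (\<lambda>w. 2 * a i * (fst w - x))" using int by simp
  have "measure_pmf.expectation N (\<lambda>w. (fst w - x)\<^sup>2
        + 2 * (\<Sum>j\<in>UNIV. a j * ((fst w - x) * (if snd w = j then 1 else 0)))
        - 2 * a i * (fst w - x)
        + (\<Sum>j\<in>UNIV. (a j - a i)\<^sup>2 * (if snd w = j then 1 else 0)))
      = measure_pmf.expectation N (\<lambda>w. (fst w - x)\<^sup>2)
        + measure_pmf.expectation N (\<lambda>w. 2 * (\<Sum>j\<in>UNIV. a j * ((fst w - x) * (if snd w = j then 1 else 0))))
        - measure_pmf.expectation N (\<lambda>w. 2 * a i * (fst w - x))
        + measure_pmf.expectation N (\<lambda>w. (\<Sum>j\<in>UNIV. (a j - a i)\<^sup>2 * (if snd w = j then 1 else (0::real))))"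
    using int2 iA iB iC
    by (simp add: Bochner_Integration.integral_add Bochner_Integration.integral_diff)
  also have "\<dots> = measure_pmf.expectation N (\<lambda>w. (fst w - x)\<^sup>2)
        + 2 * (\<Sum>j\<in>UNIV. a j * measure_pmf.expectation N (\<lambda>w. (fst w - x) * (if snd w = j then 1 else 0)))
        - 2 * a i * measure_pmf.expectation N (\<lambda>w. fst w - x)
        + (\<Sum>j\<in>UNIV. (a j - a i)\<^sup>2 * measure_pmf.prob N {w. snd w = j})"
    using integrable_zind[OF int] integrable_ind
    apply (subst exp_sum_c[of N "\<lambda>j w. if snd w = j then 1 else (0::real)"])
     apply (rule integrable_ind)
    apply (subst integral_mult_right_zero)
    apply (subst exp_sum_c[of N "\<lambda>j w. (fst w - x) * (if snd w = j then 1 else (0::real))"])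
     apply (rule integrable_zind[OF int])
    by (simp add: prob_ind)
  finally show ?thesis unfolding eq .
qed

lemma along_le: "along L \<le> at_top"
  unfolding along_def by simp

lemma ev_along_pos: "eventually (\<lambda>x::real. x > 0) (along L)"
  by (rule filter_leD[OF along_le]) (rule eventually_gt_at_top)

lemma ev_along_mem: "eventually (\<lambda>x. x \<in> L) (along L)"
  unfolding along_def eventually_inf_principal by simp

lemma powr_o: "r < s \<Longrightarrow> (\<lambda>x::real. x powr r) \<in> o[at_top](\<lambda>x. x powr s)"
  using powr_smallo_iff[of "\<lambda>x. x" at_top r s] by (simp add: filterlim_ident)

lemma powr_O: "r \<le> s \<Longrightarrow> (\<lambda>x::real. x powr r) \<in> O[at_top](\<lambda>x. x powr s)"
  using powr_bigo_iff[of "\<lambda>x. x" at_top r s] by (simp add: filterlim_ident)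

lemma shift_powr_O: "(\<lambda>y::real. (y - c) powr r) \<in> O[at_top](\<lambda>y. y powr r)"
proof -
  have "(\<lambda>y::real. y - c) \<sim>[at_top] (\<lambda>y. y)" by real_asymp
  then have "(\<lambda>y::real. (y - c) powr r) \<sim>[at_top] (\<lambda>y. y powr r)"
    by (rule asymp_equiv_powr_real) (auto intro: eventually_ge_at_top)
  then show ?thesis by (intro bigthetaD1 asymp_equiv_imp_bigtheta)
qed

lemma smallo_cmult: "f \<in> o[F](g) \<Longrightarrow> (\<lambda>x. c * f x) \<in> o[F](g)"
  by (cases "c = 0") auto

lemma inv_diff_o:
  fixes \<delta> :: real assumes "\<delta> < 1"
  shows "(\<lambda>y::real. c / (y - b) - c / y) \<in> o[at_top](\<lambda>y. y powr (-1 - \<delta>))"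
proof -
  have 1: "(\<lambda>y::real. 1 / (y * (y - b))) \<in> O[at_top](\<lambda>y. y powr -2)" by real_asymp
  have 2: "(\<lambda>y::real. 1 / (y * (y - b))) \<in> o[at_top](\<lambda>y. y powr (-1 - \<delta>))"
    using landau_o.big_small_trans[OF 1 powr_o] assms by simp
  have ev: "eventually (\<lambda>y::real. c / (y - b) - c / y = c * b * (1 / (y * (y - b)))) at_top"
    using eventually_gt_at_top[of "max 0 b"]
    by eventually_elim (auto simp: field_simps)
  show ?thesis
    using smallo_cmult[OF 2, of "c * b"] landau_o.small.in_cong[OF ev] by simp
qed

lemma tendsto_o:
  assumes "(f \<longlongrightarrow> l) (along L)"
  shows "(\<lambda>x. f x - l) \<in> o[along L](\<lambda>x::real. x powr 0)"
proof -
  have h: "(\<lambda>x. f x - l) \<in> o[along L](\<lambda>x. 1)"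
    by (rule smalloI_tendsto) (use assms in \<open>auto intro!: tendsto_eq_intros\<close>)
  have e: "eventually (\<lambda>x::real. 1 = x powr 0) (along L)"
    using ev_along_pos by eventually_elim simp
  show ?thesis using h landau_o.small.cong[OF e] by blast
qed

lemma inv_o:
  assumes "f \<in> o[along L](\<lambda>x::real. 1 / x)"
  shows "f \<in> o[along L](\<lambda>x::real. x powr (-1 - 0))"
proof -
  have "eventually (\<lambda>x::real. 1 / x = x powr (-1 - 0)) (along L)"
    using ev_along_pos by eventually_elim (simp add: powr_minus_divide)
  from landau_o.small.cong[OF this] show ?thesis using assms by blast
qed

lemma inv_o_powr:
  fixes \<delta> :: real assumes "\<delta> < 1"
  shows "(\<lambda>x::real. c / x) \<in> o[along L](\<lambda>x. x powr (- \<delta>))"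
proof -
  have lt: "-1 < - \<delta>" using assms by simp
  have "(\<lambda>x::real. x powr -1) \<in> o[along L](\<lambda>x. x powr (- \<delta>))"
    by (rule landau_o.small.filter_mono[OF along_le powr_o[OF lt]])
  then have "(\<lambda>x::real. c * x powr -1) \<in> o[along L](\<lambda>x. x powr (- \<delta>))" by (rule smallo_cmult)
  moreover have ev: "eventually (\<lambda>x::real. c * x powr -1 = c / x) (along L)"
    using ev_along_pos by eventually_elim (simp add: powr_minus_divide)
  ultimately show ?thesis using landau_o.small.in_cong[OF ev] by blast
qed

lemma weaken_o:
  assumes "f \<in> o[along L](\<lambda>x::real. x powr r)" "r \<le> s"
  shows "f \<in> o[along L](\<lambda>x::real. x powr s)"
  using landau_o.small_big_trans[OF assms(1) landau_o.big.filter_mono[OF along_le powr_O[OF assms(2)]]] .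

lemma strengthen_o:
  assumes "f \<in> o[along L](\<lambda>x::real. x powr r)" "r < s"
  shows "f \<in> o[along L](\<lambda>x::real. x powr s)"
  using assms(2) by (intro weaken_o[OF assms(1)]) simp

lemma transfer_o:
  assumes "f \<in> o[along L](\<lambda>x::real. x powr r)" "\<And>y. y \<in> T \<Longrightarrow> y - c \<in> L"
  shows "(\<lambda>y. f (y - c)) \<in> o[along T](\<lambda>y. y powr r)"
proof -
  have lim0: "filterlim (\<lambda>y::real. y - c) at_top at_top" by real_asymp
  have lim: "filterlim (\<lambda>y::real. y - c) (along L) (along T)"
    unfolding along_def filterlim_inf
  proof
    show "filterlim (\<lambda>y. y - c) at_top (inf at_top (principal T))"
      using filterlim_mono[OF lim0 order_refl] by (simp add: filterlim_mono)
    show "filterlim (\<lambda>y. y - c) (principal L) (inf at_top (principal T))"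
      unfolding filterlim_principal eventually_inf_principal using assms(2) by simp
  qed
  have "(\<lambda>y. f (y - c)) \<in> o[along T](\<lambda>y. (y - c) powr r)"
    by (rule landau_o.small.compose[OF assms(1) lim])
  then show ?thesis
    using landau_o.small_big_trans landau_o.big.filter_mono[OF along_le shift_powr_O] by blast
qed

theorem lemma5p1:
  fixes \<Sigma> :: "(real \<times> 's::finite) set"
    and K :: "real \<times> 's \<Rightarrow> (real \<times> 's) pmf"
    and p Cp :: real
    and qbar \<gamma> :: "'s \<Rightarrow> 's \<Rightarrow> real" and \<pi> :: "'s \<Rightarrow> real"
    and d e t2 :: "'s \<Rightarrow> real" and dd :: "'s \<Rightarrow> 's \<Rightarrow> real"
    and a :: "'s \<Rightarrow> real" and \<delta>4 :: real
  assumes Sigma_pos: "\<forall>(x, i)\<in>\<Sigma>. x \<ge> 0"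
    and Sigma_lf: "locally_finite \<Sigma>"
    and K_Sigma: "\<forall>z\<in>\<Sigma>. set_pmf (K z) \<subseteq> \<Sigma>"
    and irred: "chain_irreducible \<Sigma> K"
    and unbounded: "\<forall>k. \<not> bdd_above (line \<Sigma> k)"
    and p_gt: "p > 2"
    and moment: "\<forall>(x, i)\<in>\<Sigma>. (\<integral>\<^sup>+ w. ennreal (\<bar>fst w - x\<bar> powr p) \<partial>(K (x, i))) \<le> ennreal Cp"
    \<comment> \<open>(Q_G)\<close>
    and qbar_stoch: "\<forall>i j. qbar i j \<ge> 0" "\<forall>i. (\<Sum>j\<in>UNIV. qbar i j) = 1"
    and qbar_irred: "\<forall>i j. (i, j) \<in> {(k, l). qbar k l > 0}\<^sup>*"
    and \<pi>_stat: "\<forall>i. \<pi> i \<ge> 0" "(\<Sum>i\<in>UNIV. \<pi> i) = 1" "\<forall>j. (\<Sum>i\<in>UNIV. \<pi> i * qbar i j) = \<pi> j"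
    and QG: "\<forall>i j. (\<lambda>x. qx K i j x - qbar i j - \<gamma> i j / x) \<in> o[along (line \<Sigma> i)](\<lambda>x. 1 / x)"
    \<comment> \<open>(D_G)\<close>
    and DG_mu: "\<forall>i. (\<lambda>x. mux K i x - d i - e i / x) \<in> o[along (line \<Sigma> i)](\<lambda>x. 1 / x)"
    and DG_sigma: "\<forall>i. ((\<lambda>x. sigma2x K i x) \<longlongrightarrow> t2 i) (along (line \<Sigma> i))"
    and DG_muij: "\<forall>i j. ((\<lambda>x. muijx K i j x) \<longlongrightarrow> dd i j) (along (line \<Sigma> i))"
    and t2_nonneg: "\<forall>i. t2 i \<ge> 0"
    and t2_nz: "\<exists>i. t2 i \<noteq> 0"
    and drift_zero: "(\<Sum>i\<in>UNIV. \<pi> i * d i) = 0"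
    \<comment> \<open>the vector a\<close>
    and a_nonneg: "\<forall>i. a i \<ge> 0"
    and a_eq: "\<forall>i. d i + (\<Sum>j\<in>UNIV. (a j - a i) * qbar i j) = 0"
    \<comment> \<open>case (i) or case (ii)\<close>
    and cases: "\<delta>4 = 0 \<or>
      (\<exists>\<delta>2 \<delta>3. 0 < \<delta>2 \<and> \<delta>2 < 1 \<and> 0 < \<delta>3 \<and> \<delta>3 < 1 \<and> \<delta>4 = min \<delta>2 \<delta>3 \<and>
        (\<forall>i j. (\<lambda>x. qx K i j x - qbar i j - \<gamma> i j / x)
                 \<in> o[along (line \<Sigma> i)](\<lambda>x. x powr (-1 - \<delta>3))) \<and>
        (\<forall>i. (\<lambda>x. mux K i x - d i - e i / x)
                 \<in> o[along (line \<Sigma> i)](\<lambda>x. x powr (-1 - \<delta>2))) \<and>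
        (\<forall>i. (\<lambda>x. sigma2x K i x - t2 i) \<in> o[along (line \<Sigma> i)](\<lambda>x. x powr (- \<delta>2))) \<and>
        (\<forall>i j. (\<lambda>x. muijx K i j x - dd i j) \<in> o[along (line \<Sigma> i)](\<lambda>x. x powr (- \<delta>2))))"
  shows "\<forall>i. (\<lambda>y. mut K a i y - (e i + (\<Sum>j\<in>UNIV. a j * \<gamma> i j)) / y)
                \<in> o[along {y. (y - a i, i) \<in> \<Sigma>}](\<lambda>y. y powr (-1 - \<delta>4))
           \<and> (\<lambda>y. sigma2t K a i y
                   - (t2 i + 2 * (\<Sum>j\<in>UNIV. a j * dd i j) + (\<Sum>j\<in>UNIV. ((a j)\<^sup>2 - (a i)\<^sup>2) * qbar i j)))
                \<in> o[along {y. (y - a i, i) \<in> \<Sigma>}](\<lambda>y. y powr (- \<delta>4))"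
proof (intro allI)
  fix i
  define \<delta> where "\<delta> = \<delta>4"
  have \<delta>_bounds: "0 \<le> \<delta> \<and> \<delta> < 1" using cases unfolding \<delta>_def by auto
  have Aq: "(\<lambda>x. qx K k j x - qbar k j - \<gamma> k j / x) \<in> o[along (line \<Sigma> k)](\<lambda>x. x powr (-1 - \<delta>))" for k j
    using cases
  proof
    assume "\<delta>4 = 0" then show ?thesis using inv_o QG unfolding \<delta>_def by simp
  next
    assume "\<exists>\<delta>2 \<delta>3. 0 < \<delta>2 \<and> \<delta>2 < 1 \<and> 0 < \<delta>3 \<and> \<delta>3 < 1 \<and> \<delta>4 = min \<delta>2 \<delta>3 \<and>
        (\<forall>i j. (\<lambda>x. qx K i j x - qbar i j - \<gamma> i j / x)
                 \<in> o[along (line \<Sigma> i)](\<lambda>x. x powr (-1 - \<delta>3))) \<and>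
        (\<forall>i. (\<lambda>x. mux K i x - d i - e i / x)
                 \<in> o[along (line \<Sigma> i)](\<lambda>x. x powr (-1 - \<delta>2))) \<and>
        (\<forall>i. (\<lambda>x. sigma2x K i x - t2 i) \<in> o[along (line \<Sigma> i)](\<lambda>x. x powr (- \<delta>2))) \<and>
        (\<forall>i j. (\<lambda>x. muijx K i j x - dd i j) \<in> o[along (line \<Sigma> i)](\<lambda>x. x powr (- \<delta>2)))"
    then obtain \<delta>2 \<delta>3 where h: "\<delta>4 = min \<delta>2 \<delta>3" "\<forall>i j. (\<lambda>x. qx K i j x - qbar i j - \<gamma> i j / x)
                 \<in> o[along (line \<Sigma> i)](\<lambda>x. x powr (-1 - \<delta>3))" by blast
    show ?thesis by (rule weaken_o[OF h(2)[rule_format]]) (simp add: \<delta>_def h(1))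
  qed
  have Amu: "(\<lambda>x. mux K k x - d k - e k / x) \<in> o[along (line \<Sigma> k)](\<lambda>x. x powr (-1 - \<delta>))" for k
    using cases
  proof
    assume "\<delta>4 = 0" then show ?thesis using inv_o DG_mu unfolding \<delta>_def by simp
  next
    assume "\<exists>\<delta>2 \<delta>3. 0 < \<delta>2 \<and> \<delta>2 < 1 \<and> 0 < \<delta>3 \<and> \<delta>3 < 1 \<and> \<delta>4 = min \<delta>2 \<delta>3 \<and>
        (\<forall>i j. (\<lambda>x. qx K i j x - qbar i j - \<gamma> i j / x)
                 \<in> o[along (line \<Sigma> i)](\<lambda>x. x powr (-1 - \<delta>3))) \<and>
        (\<forall>i. (\<lambda>x. mux K i x - d i - e i / x)
                 \<in> o[along (line \<Sigma> i)](\<lambda>x. x powr (-1 - \<delta>2))) \<and>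
        (\<forall>i. (\<lambda>x. sigma2x K i x - t2 i) \<in> o[along (line \<Sigma> i)](\<lambda>x. x powr (- \<delta>2))) \<and>
        (\<forall>i j. (\<lambda>x. muijx K i j x - dd i j) \<in> o[along (line \<Sigma> i)](\<lambda>x. x powr (- \<delta>2)))"
    then obtain \<delta>2 \<delta>3 where h: "\<delta>4 = min \<delta>2 \<delta>3" "\<forall>i. (\<lambda>x. mux K i x - d i - e i / x)
                 \<in> o[along (line \<Sigma> i)](\<lambda>x. x powr (-1 - \<delta>2))" by blast
    show ?thesis by (rule weaken_o[OF h(2)[rule_format]]) (simp add: \<delta>_def h(1))
  qed
  have Csig: "(\<lambda>x. sigma2x K k x - t2 k) \<in> o[along (line \<Sigma> k)](\<lambda>x. x powr (- \<delta>))" for k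
    using cases
  proof
    assume "\<delta>4 = 0" then show ?thesis using tendsto_o DG_sigma unfolding \<delta>_def by simp
  next
    assume "\<exists>\<delta>2 \<delta>3. 0 < \<delta>2 \<and> \<delta>2 < 1 \<and> 0 < \<delta>3 \<and> \<delta>3 < 1 \<and> \<delta>4 = min \<delta>2 \<delta>3 \<and>
        (\<forall>i j. (\<lambda>x. qx K i j x - qbar i j - \<gamma> i j / x)
                 \<in> o[along (line \<Sigma> i)](\<lambda>x. x powr (-1 - \<delta>3))) \<and>
        (\<forall>i. (\<lambda>x. mux K i x - d i - e i / x)
                 \<in> o[along (line \<Sigma> i)](\<lambda>x. x powr (-1 - \<delta>2))) \<and>
        (\<forall>i. (\<lambda>x. sigma2x K i x - t2 i) \<in> o[along (line \<Sigma> i)](\<lambda>x. x powr (- \<delta>2))) \<and>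
        (\<forall>i j. (\<lambda>x. muijx K i j x - dd i j) \<in> o[along (line \<Sigma> i)](\<lambda>x. x powr (- \<delta>2)))"
    then obtain \<delta>2 \<delta>3 where h: "\<delta>4 = min \<delta>2 \<delta>3"
       "\<forall>i. (\<lambda>x. sigma2x K i x - t2 i) \<in> o[along (line \<Sigma> i)](\<lambda>x. x powr (- \<delta>2))" by blast
    show ?thesis by (rule weaken_o[OF h(2)[rule_format]]) (simp add: \<delta>_def h(1))
  qed
  have Cmuij: "(\<lambda>x. muijx K k j x - dd k j) \<in> o[along (line \<Sigma> k)](\<lambda>x. x powr (- \<delta>))" for k j
    using cases
  proof
    assume "\<delta>4 = 0" then show ?thesis using tendsto_o DG_muij unfolding \<delta>_def by simp
  next
    assume "\<exists>\<delta>2 \<delta>3. 0 < \<delta>2 \<and> \<delta>2 < 1 \<and> 0 < \<delta>3 \<and> \<delta>3 < 1 \<and> \<delta>4 = min \<delta>2 \<delta>3 \<and>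
        (\<forall>i j. (\<lambda>x. qx K i j x - qbar i j - \<gamma> i j / x)
                 \<in> o[along (line \<Sigma> i)](\<lambda>x. x powr (-1 - \<delta>3))) \<and>
        (\<forall>i. (\<lambda>x. mux K i x - d i - e i / x)
                 \<in> o[along (line \<Sigma> i)](\<lambda>x. x powr (-1 - \<delta>2))) \<and>
        (\<forall>i. (\<lambda>x. sigma2x K i x - t2 i) \<in> o[along (line \<Sigma> i)](\<lambda>x. x powr (- \<delta>2))) \<and>
        (\<forall>i j. (\<lambda>x. muijx K i j x - dd i j) \<in> o[along (line \<Sigma> i)](\<lambda>x. x powr (- \<delta>2)))"
    then obtain \<delta>2 \<delta>3 where h: "\<delta>4 = min \<delta>2 \<delta>3"
       "\<forall>i j. (\<lambda>x. muijx K i j x - dd i j) \<in> o[along (line \<Sigma> i)](\<lambda>x. x powr (- \<delta>2))" by blast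
    show ?thesis by (rule weaken_o[OF h(2)[rule_format]]) (simp add: \<delta>_def h(1))
  qed
  have Bq: "(\<lambda>x. qx K k j x - qbar k j) \<in> o[along (line \<Sigma> k)](\<lambda>x. x powr (- \<delta>))" for k j
  proof -
    have "(\<lambda>x. (qx K k j x - qbar k j - \<gamma> k j / x) + \<gamma> k j / x) \<in> o[along (line \<Sigma> k)](\<lambda>x. x powr (- \<delta>))"
      by (intro sum_in_smallo strengthen_o[OF Aq] inv_o_powr) (use \<delta>_bounds in auto)
    then show ?thesis by simp
  qed
  have Bmu: "(\<lambda>x. mux K k x - d k) \<in> o[along (line \<Sigma> k)](\<lambda>x. x powr (- \<delta>))" for k
  proof -
    have "(\<lambda>x. (mux K k x - d k - e k / x) + e k / x) \<in> o[along (line \<Sigma> k)](\<lambda>x. x powr (- \<delta>))"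
      by (intro sum_in_smallo strengthen_o[OF Amu] inv_o_powr) (use \<delta>_bounds in auto)
    then show ?thesis by simp
  qed
  define T where "T = {y. (y - a i, i) \<in> \<Sigma>}"
  have memT: "\<And>y. y \<in> T \<Longrightarrow> y - a i \<in> line \<Sigma> i" unfolding T_def line_def by simp
  have intK: "integrable (K (y - a i, i)) (\<lambda>w. fst w - (y - a i))"
     "integrable (K (y - a i, i)) (\<lambda>w. (fst w - (y - a i))\<^sup>2)" if "y \<in> T" for y
    using integrable_moment[where f="\<lambda>w. fst w - (y - a i)" and p=p and N="K (y - a i, i)" and C=Cp] moment p_gt that
    unfolding T_def by auto
  have evT: "eventually (\<lambda>y. y \<in> T) (along T)" by (rule ev_along_mem)
  define c where "c = e i + (\<Sum>j\<in>UNIV. a j * \<gamma> i j)"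
  define R1 where "R1 = (\<lambda>x. (mux K i x - d i - e i / x) + (\<Sum>j\<in>UNIV. a j * (qx K i j x - qbar i j - \<gamma> i j / x)))"
  have R1o: "R1 \<in> o[along (line \<Sigma> i)](\<lambda>x. x powr (-1 - \<delta>))"
    unfolding R1_def by (intro sum_in_smallo big_sum_in_smallo smallo_cmult Amu Aq)
  have R1e: "mux K i x + (\<Sum>j\<in>UNIV. a j * qx K i j x) - a i - c / x = R1 x" for x
  proof -
    have z: "d i + (\<Sum>j\<in>UNIV. a j * qbar i j) - a i = 0"
      using a_eq[rule_format, of i] qbar_stoch(2)[rule_format, of i]
      by (simp add: algebra_simps sum_subtractf sum_distrib_left[symmetric])
    have "(\<Sum>j\<in>UNIV. a j * (qx K i j x - qbar i j - \<gamma> i j / x))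
        = (\<Sum>j\<in>UNIV. a j * qx K i j x) - (\<Sum>j\<in>UNIV. a j * qbar i j) - (\<Sum>j\<in>UNIV. a j * \<gamma> i j) / x"
      by (simp add: algebra_simps sum_subtractf sum_divide_distrib sum.distrib)
    then show ?thesis using z unfolding R1_def c_def by (simp add: add_divide_distrib)
  qed
  have P1: "(\<lambda>y. mut K a i y - c / y) \<in> o[along T](\<lambda>y. y powr (-1 - \<delta>))"
  proof -
    have "(\<lambda>y. R1 (y - a i) + (c / (y - a i) - c / y)) \<in> o[along T](\<lambda>y. y powr (-1 - \<delta>))"
      by (intro sum_in_smallo transfer_o[OF R1o memT] landau_o.small.filter_mono[OF along_le inv_diff_o])
         (use \<delta>_bounds in auto)
    moreover have ev: "eventually (\<lambda>y. R1 (y - a i) + (c / (y - a i) - c / y) = mut K a i y - c / y) (along T)"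
      using evT
    proof eventually_elim
      case (elim y)
      have "mut K a i y = mux K i (y - a i) + (\<Sum>j\<in>UNIV. a j * qx K i j (y - a i)) - (y - (y - a i))"
        unfolding mut_def mux_def qx_def by (rule mut_eq[OF intK(1)[OF elim]])
      then show ?case using R1e[of "y - a i"] by simp
    qed
    ultimately show ?thesis using landau_o.small.in_cong[OF ev] by blast
  qed
  define s2 where "s2 = t2 i + 2 * (\<Sum>j\<in>UNIV. a j * dd i j) + (\<Sum>j\<in>UNIV. ((a j)\<^sup>2 - (a i)\<^sup>2) * qbar i j)"
  have s2e: "s2 = t2 i + 2 * (\<Sum>j\<in>UNIV. a j * dd i j) - 2 * a i * d i + (\<Sum>j\<in>UNIV. (a j - a i)\<^sup>2 * qbar i j)"
  proof -
    have di: "d i = - (\<Sum>j\<in>UNIV. (a j - a i) * qbar i j)" using a_eq[rule_format, of i] by simp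
    have "(\<Sum>j\<in>UNIV. ((a j)\<^sup>2 - (a i)\<^sup>2) * qbar i j)
        = (\<Sum>j\<in>UNIV. (a j - a i)\<^sup>2 * qbar i j + 2 * a i * ((a j - a i) * qbar i j))"
      by (rule sum.cong) (auto simp: power2_eq_square algebra_simps)
    also have "\<dots> = (\<Sum>j\<in>UNIV. (a j - a i)\<^sup>2 * qbar i j) + 2 * a i * (\<Sum>j\<in>UNIV. (a j - a i) * qbar i j)"
      by (simp add: sum.distrib sum_distrib_left)
    finally show ?thesis unfolding s2_def di by simp
  qed
  define R2 where "R2 = (\<lambda>x. (sigma2x K i x - t2 i) + 2 * (\<Sum>j\<in>UNIV. a j * (muijx K i j x - dd i j))
        - 2 * a i * (mux K i x - d i) + (\<Sum>j\<in>UNIV. (a j - a i)\<^sup>2 * (qx K i j x - qbar i j)))"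
  have R2o: "R2 \<in> o[along (line \<Sigma> i)](\<lambda>x. x powr (- \<delta>))"
    unfolding R2_def by (intro sum_in_smallo big_sum_in_smallo smallo_cmult Csig Cmuij Bmu Bq)
  have R2e: "sigma2x K i x + 2 * (\<Sum>j\<in>UNIV. a j * muijx K i j x) - 2 * a i * mux K i x
        + (\<Sum>j\<in>UNIV. (a j - a i)\<^sup>2 * qx K i j x) - s2 = R2 x" for x
    unfolding R2_def s2e by (simp add: algebra_simps sum_subtractf)
  have P2: "(\<lambda>y. sigma2t K a i y - s2) \<in> o[along T](\<lambda>y. y powr (- \<delta>))"
  proof -
    have "(\<lambda>y. R2 (y - a i)) \<in> o[along T](\<lambda>y. y powr (- \<delta>))"
      by (rule transfer_o[OF R2o memT])
    moreover have ev: "eventually (\<lambda>y. R2 (y - a i) = sigma2t K a i y - s2) (along T)"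
      using evT
    proof eventually_elim
      case (elim y)
      have "sigma2t K a i y = sigma2x K i (y - a i) + 2 * (\<Sum>j\<in>UNIV. a j * muijx K i j (y - a i))
          - 2 * a i * mux K i (y - a i) + (\<Sum>j\<in>UNIV. (a j - a i)\<^sup>2 * qx K i j (y - a i))"
        unfolding sigma2t_def sigma2x_def muijx_def mux_def qx_def
        by (rule sig_eq[OF intK[OF elim]]) simp
      then show ?case using R2e[of "y - a i"] by simp
    qed
    ultimately show ?thesis using landau_o.small.in_cong[OF ev] by blast
  qed
  show "(\<lambda>y. mut K a i y - (e i + (\<Sum>j\<in>UNIV. a j * \<gamma> i j)) / y)
                \<in> o[along {y. (y - a i, i) \<in> \<Sigma>}](\<lambda>y. y powr (-1 - \<delta>4))
           \<and> (\<lambda>y. sigma2t K a i y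
                   - (t2 i + 2 * (\<Sum>j\<in>UNIV. a j * dd i j) + (\<Sum>j\<in>UNIV. ((a j)\<^sup>2 - (a i)\<^sup>2) * qbar i j)))
                \<in> o[along {y. (y - a i, i) \<in> \<Sigma>}](\<lambda>y. y powr (- \<delta>4))"
    using P1 P2 unfolding c_def s2_def T_def \<delta>_def by simp
qed

end
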